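(* Suppose the sensor messages are binary ($l=2$) and the densities $f_0,\dots,f_{M-1}$ are linearly independent. Then $Q_\alpha=Q_U$, i.e., the set of extreme points of $\bar Q$ coincides with the set of distribution vectors of ULQs.
   Context: A raw observation $X$ has density $f_m$ under state $m\in\{0,\dots,M-1\}$ (probability $\mathbf P_m$) with respect to a common $\sigma$-finite measure. Deterministic quantizers are measurable maps $\phi$ to $\{0,1\}$ (set $\Phi$); a randomized quantizer $\bar\phi=\sum_jp^j\phi^j$ is a probability distribution on a countable subset of $\Phi$; $\bar\Phi$ is the set of all quantizers. The distribution vector of $\bar\phi\in\bar\Phi$ is $q(\bar\phi)=(\mathbf P_m(\bar\phi(X)=i))_{0\le i\le l-1,\,0\le m\le M-1}\in\mathbb R^{Ml}$ (for randomized $\bar\phi$, $\mathbf P_m(\bar\phi(X)=i)=\sum_jp^j\mathbf P_m(\phi^j(X)=i)$). Let $Q=\{q(\phi):\phi\in\Phi\}$, $\bar Q=\{q(\bar\phi):\bar\phi\in\bar\Phi\}$ (which is the compact convex hull of the compact set $Q$), $Q_U=\{q(\phi):\phi\text{ a ULQ}\}$, and $Q_\alpha$ the set of extreme points of $\bar Q$. A deterministic quantizer $\phi$ is a ULQ if $\phi(X)=\mathbf 1\{\sum_ma_mf_m(X)>0\}$ for reals $a_0,\dots,a_{M-1}$ with $\mathbf P_{m'}\{\sum_ma_mf_m(X)=0\}=0$ for all $m'$. The densities are linearly independent if $\mathbf P_{m'}\{\sum_ma_mf_m(X)=0\}=0$ for every $m'$ and every $(a_m)$ not all zero. *)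

theory Defs
  imports "HOL-Analysis.Analysis"
begin

text \<open>States are indexed by a finite type 'm (M = CARD('m)); binary messages (l = 2)
  are encoded by bool (False = 0, True = 1). Distribution vectors live in
  real^('m \<times> bool), i.e. R^{Ml}.\<close>

definition prob_st :: "'a measure \<Rightarrow> ('m \<Rightarrow> 'a \<Rightarrow> real) \<Rightarrow> 'm \<Rightarrow> 'a set \<Rightarrow> real" where
  "prob_st N f m A = measure (density N (\<lambda>x. ennreal (f m x))) A"

definition det_quantizer :: "'a measure \<Rightarrow> ('a \<Rightarrow> bool) \<Rightarrow> bool" where
  "det_quantizer N \<phi> \<longleftrightarrow> \<phi> \<in> N \<rightarrow>\<^sub>M count_space UNIV"

definition dist_vec :: "'a measure \<Rightarrow> ('m::finite \<Rightarrow> 'a \<Rightarrow> real) \<Rightarrow> ('a \<Rightarrow> bool)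
    \<Rightarrow> real ^ ('m \<times> bool)" where
  "dist_vec N f \<phi> = (\<chi> k. prob_st N f (fst k) {x \<in> space N. \<phi> x = snd k})"

definition rand_quantizer :: "'a measure \<Rightarrow> (nat \<Rightarrow> real) \<Rightarrow> (nat \<Rightarrow> 'a \<Rightarrow> bool) \<Rightarrow> bool" where
  "rand_quantizer N p phis \<longleftrightarrow> (\<forall>j. p j \<ge> 0) \<and> p sums 1 \<and> (\<forall>j. det_quantizer N (phis j))"

definition rdist_vec :: "'a measure \<Rightarrow> ('m::finite \<Rightarrow> 'a \<Rightarrow> real) \<Rightarrow> (nat \<Rightarrow> real)
    \<Rightarrow> (nat \<Rightarrow> 'a \<Rightarrow> bool) \<Rightarrow> real ^ ('m \<times> bool)" where
  "rdist_vec N f p phis =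
     (\<chi> k. \<Sum>j. p j * prob_st N f (fst k) {x \<in> space N. phis j x = snd k})"

definition Qbar :: "'a measure \<Rightarrow> ('m::finite \<Rightarrow> 'a \<Rightarrow> real) \<Rightarrow> (real ^ ('m \<times> bool)) set" where
  "Qbar N f = {rdist_vec N f p phis | p phis. rand_quantizer N p phis}"

definition is_ULQ :: "'a measure \<Rightarrow> ('m::finite \<Rightarrow> 'a \<Rightarrow> real) \<Rightarrow> ('a \<Rightarrow> bool) \<Rightarrow> bool" where
  "is_ULQ N f \<phi> \<longleftrightarrow> det_quantizer N \<phi> \<and>
     (\<exists>a :: 'm \<Rightarrow> real.
        (\<forall>x \<in> space N. \<phi> x = ((\<Sum>m\<in>UNIV. a m * f m x) > 0)) \<and>
        (\<forall>m'. prob_st N f m' {x \<in> space N. (\<Sum>m\<in>UNIV. a m * f m x) = 0} = 0))"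

definition Q_U :: "'a measure \<Rightarrow> ('m::finite \<Rightarrow> 'a \<Rightarrow> real) \<Rightarrow> (real ^ ('m \<times> bool)) set" where
  "Q_U N f = {dist_vec N f \<phi> | \<phi>. is_ULQ N f \<phi>}"

definition Q_alpha :: "'a measure \<Rightarrow> ('m::finite \<Rightarrow> 'a \<Rightarrow> real) \<Rightarrow> (real ^ ('m \<times> bool)) set" where
  "Q_alpha N f = {v. v extreme_point_of Qbar N f}"

definition lin_indep_dens :: "'a measure \<Rightarrow> ('m::finite \<Rightarrow> 'a \<Rightarrow> real) \<Rightarrow> bool" where
  "lin_indep_dens N f \<longleftrightarrow> (\<forall>a :: 'm \<Rightarrow> real. a \<noteq> (\<lambda>_. 0) \<longrightarrow>
     (\<forall>m'. prob_st N f m' {x \<in> space N. (\<Sum>m\<in>UNIV. a m * f m x) = 0} = 0))"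

end

theory Submission imports Defs begin

locale qs =
  fixes N :: "'a measure" and f :: "'m::finite \<Rightarrow> 'a \<Rightarrow> real"
  assumes fm[measurable]: "\<And>m. f m \<in> borel_measurable N"
    and fnn: "\<And>m x. x \<in> space N \<Longrightarrow> f m x \<ge> 0"
    and f1: "\<And>m. (\<integral>\<^sup>+ x. ennreal (f m x) \<partial>N) = 1"
begin

definition S where "S \<psi> b = {x \<in> space N. \<psi> x = b}"
abbreviation P where "P m \<psi> b \<equiv> prob_st N f m (S \<psi> b)"

lemma fint: "integrable N (f m)"
proof -
  have "(\<integral>\<^sup>+ x. ennreal (norm (f m x)) \<partial>N) = (\<integral>\<^sup>+ x. ennreal (f m x) \<partial>N)"
    by (intro nn_integral_cong) (simp add: fnn)
  then show ?thesis using f1[of m] by (intro integrableI_bounded) auto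
qed

lemma fint1: "integral\<^sup>L N (f m) = 1"
proof -
  have "ennreal (integral\<^sup>L N (f m)) = 1"
    using nn_integral_eq_integral[OF fint, of m] f1[of m] fnn
    by (metis AE_I2)
  then show ?thesis by simp
qed

lemma prob_eq: assumes A: "A \<in> sets N"
  shows "prob_st N f m A = (\<integral>x. indicator A x * f m x \<partial>N)"
proof -
  have int: "integrable N (\<lambda>x. indicator A x * f m x)"
    using integrable_mult_indicator[OF A fint[of m]] by simp
  have "emeasure (density N (\<lambda>x. ennreal (f m x))) A = (\<integral>\<^sup>+ x. ennreal (f m x) * indicator A x \<partial>N)"
    using A by (simp add: emeasure_density)
  also have "\<dots> = (\<integral>\<^sup>+ x. ennreal (indicator A x * f m x) \<partial>N)"
    by (intro nn_integral_cong) (auto split: split_indicator)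
  also have "\<dots> = ennreal (\<integral>x. indicator A x * f m x \<partial>N)"
    using int fnn by (intro nn_integral_eq_integral) (auto split: split_indicator)
  finally show ?thesis unfolding prob_st_def measure_def
    by (simp add: integral_nonneg_AE fnn split: split_indicator)
qed

lemma Ssets: assumes "det_quantizer N \<psi>" shows "S \<psi> b \<in> sets N"
proof -
  have "\<psi> -` {b} \<inter> space N \<in> sets N"
    using assms unfolding det_quantizer_def by (intro measurable_sets) auto
  moreover have "\<psi> -` {b} \<inter> space N = S \<psi> b" by (auto simp: S_def)
  ultimately show ?thesis by simp
qed

lemma indint: "A \<in> sets N \<Longrightarrow> integrable N (\<lambda>x. indicator A x * f m x)"
  using integrable_mult_indicator[OF _ fint[of m]] by simp

lemma P_nonneg: "det_quantizer N \<psi> \<Longrightarrow> P m \<psi> b \<ge> 0"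
  by (simp add: prob_eq Ssets integral_nonneg_AE fnn split: split_indicator)

lemma P_sum: assumes "det_quantizer N \<psi>" shows "P m \<psi> True + P m \<psi> False = 1"
proof -
  have "P m \<psi> True + P m \<psi> False = (\<integral>x. indicator (S \<psi> True) x * f m x + indicator (S \<psi> False) x * f m x \<partial>N)"
    using prob_eq[OF Ssets[OF assms, of True]] prob_eq[OF Ssets[OF assms, of False]]
      indint[OF Ssets[OF assms, of True]] indint[OF Ssets[OF assms, of False]] by simp
  also have "\<dots> = integral\<^sup>L N (f m)"
    by (intro Bochner_Integration.integral_cong) (auto simp: S_def split: split_indicator)
  finally show ?thesis using fint1 by simp
qed

lemma P_le1: assumes "det_quantizer N \<psi>" shows "P m \<psi> b \<le> 1"
  using P_sum[OF assms, of m] P_nonneg[OF assms, of m True] P_nonneg[OF assms, of m False] by (cases b) auto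

definition g :: "('m \<Rightarrow> real) \<Rightarrow> 'a \<Rightarrow> real" where
  "g a x = (\<Sum>m\<in>UNIV. a m * f m x)"

lemma g_meas[measurable]: "g a \<in> borel_measurable N"
  unfolding g_def by measurable

lemma g_int: "integrable N (\<lambda>x. indicator A x * g a x)" if "A \<in> sets N"
proof -
  have "integrable N (\<lambda>x. \<Sum>m\<in>UNIV. a m * (indicator A x * f m x))"
    by (rule Bochner_Integration.integrable_sum) (intro integrable_mult_right indint[OF that])
  moreover have "(\<lambda>x. \<Sum>m\<in>UNIV. a m * (indicator A x * f m x)) = (\<lambda>x. indicator A x * g a x)"
    by (auto simp: g_def sum_distrib_left algebra_simps)
  ultimately show ?thesis by simp
qed

definition G :: "('m \<Rightarrow> real) \<Rightarrow> ('a \<Rightarrow> bool) \<Rightarrow> real" where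
  "G a \<psi> = (\<Sum>m\<in>UNIV. a m * P m \<psi> True)"

lemma G_eq: assumes "det_quantizer N \<psi>"
  shows "G a \<psi> = (\<integral>x. indicator (S \<psi> True) x * g a x \<partial>N)"
proof -
  have "G a \<psi> = (\<Sum>m\<in>UNIV. a m * (\<integral>x. indicator (S \<psi> True) x * f m x \<partial>N))"
    using prob_eq[OF Ssets[OF assms, of True]] by (simp add: G_def)
  also have "\<dots> = (\<integral>x. (\<Sum>m\<in>UNIV. a m * (indicator (S \<psi> True) x * f m x)) \<partial>N)"
    by (subst Bochner_Integration.integral_sum) (auto intro!: integrable_mult_right indint[OF Ssets[OF assms]])
  also have "\<dots> = (\<integral>x. indicator (S \<psi> True) x * g a x \<partial>N)"
    by (intro Bochner_Integration.integral_cong) (auto simp: g_def sum_distrib_left algebra_simps)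
  finally show ?thesis .
qed

lemma lemA:
  assumes dpsi: "det_quantizer N \<psi>" and dphi: "det_quantizer N \<phi>"
    and phi: "\<And>x. x \<in> space N \<Longrightarrow> \<phi> x = (g a x > 0)"
  shows "G a \<psi> \<le> G a \<phi>"
    and "G a \<psi> \<ge> G a \<phi> \<Longrightarrow> (\<And>m'. prob_st N f m' {x \<in> space N. g a x = 0} = 0)
           \<Longrightarrow> P m \<psi> b = P m \<phi> b"
proof -
  define h where "h x = indicator (S \<phi> True) x * g a x - indicator (S \<psi> True) x * g a x" for x
  have hint: "integrable N h" unfolding h_def
    using g_int[OF Ssets[OF dphi]] g_int[OF Ssets[OF dpsi]] by auto
  have hnn: "h x \<ge> 0" if "x \<in> space N" for x
    using phi[OF that] that by (auto simp: h_def S_def split: split_indicator)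
  have diff: "G a \<phi> - G a \<psi> = integral\<^sup>L N h"
    unfolding h_def using G_eq[OF dphi] G_eq[OF dpsi] g_int[OF Ssets[OF dphi]] g_int[OF Ssets[OF dpsi]]
    by simp
  have "integral\<^sup>L N h \<ge> 0" using hnn by (intro integral_nonneg_AE) auto
  then show "G a \<psi> \<le> G a \<phi>" using diff by simp
  assume ge: "G a \<psi> \<ge> G a \<phi>" and null: "\<And>m'. prob_st N f m' {x \<in> space N. g a x = 0} = 0"
  have "integral\<^sup>L N h = 0" using diff ge \<open>integral\<^sup>L N h \<ge> 0\<close> by simp
  then have AEh: "AE x in N. h x = 0"
    using integral_nonneg_eq_0_iff_AE[OF hint] hnn by auto
  define Z where "Z = {x \<in> space N. g a x = 0}"
  have Zs: "Z \<in> sets N" unfolding Z_def by measurable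
  have "(\<integral>x. indicator Z x * f m x \<partial>N) = 0" using null[of m] prob_eq[OF Zs] Z_def by simp
  then have AEZ: "AE x in N. indicator Z x * f m x = 0"
    using integral_nonneg_eq_0_iff_AE[OF indint[OF Zs]] fnn
    by (auto split: split_indicator)
  have "AE x in N. indicator (S \<psi> b) x * f m x = indicator (S \<phi> b) x * f m x"
    using AEh AEZ
  proof eventually_elim
    case (elim x)
    show ?case
    proof (cases "x \<in> space N")
      case True
      show ?thesis
      proof (cases "g a x = 0")
        case True
        then show ?thesis using elim \<open>x \<in> space N\<close> by (auto simp: Z_def S_def split: split_indicator)
      next
        case False
        then have "\<psi> x = \<phi> x" using elim(1) phi[OF \<open>x \<in> space N\<close>] \<open>x \<in> space N\<close>
          by (auto simp: h_def S_def split: split_indicator split_indicator_asm split: if_splits)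
        then show ?thesis by (auto simp: S_def split: split_indicator)
      qed
    qed (auto simp: S_def split: split_indicator)
  qed
  then show "P m \<psi> b = P m \<phi> b"
    using prob_eq[OF Ssets[OF dpsi]] prob_eq[OF Ssets[OF dphi]] Ssets[OF dpsi] Ssets[OF dphi]
    by (simp add: integral_cong_AE)
qed

lemma dist_comp: "dist_vec N f \<phi> $ (m, b) = P m \<phi> b"
  by (simp add: dist_vec_def S_def)

lemma rdist_comp: "rdist_vec N f p phis $ (m, b) = (\<Sum>j. p j * P m (phis j) b)"
  by (simp add: rdist_vec_def S_def)

lemma rsums: assumes rq: "rand_quantizer N p phis"
  shows "(\<lambda>j. p j * P m (phis j) b) sums (rdist_vec N f p phis $ (m, b))"
proof -
  have p0: "p j \<ge> 0" and dq: "det_quantizer N (phis j)" and ps: "p sums 1" for j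
    using rq by (auto simp: rand_quantizer_def)
  have "summable (\<lambda>j. p j * P m (phis j) b)"
  proof (rule summable_comparison_test)
    show "\<exists>N0. \<forall>n\<ge>N0. norm (p n * P m (phis n) b) \<le> p n"
      using p0 P_nonneg[OF dq] P_le1[OF dq]
      by (auto simp: abs_mult intro!: mult_left_le)
    show "summable p" using ps by (rule sums_summable)
  qed
  then show ?thesis by (simp add: rdist_comp summable_sums)
qed

definition G' :: "('m \<Rightarrow> real) \<Rightarrow> real ^ ('m \<times> bool) \<Rightarrow> real" where
  "G' a u = (\<Sum>m\<in>UNIV. a m * u $ (m, True))"

lemma G'_dist: "G' a (dist_vec N f \<phi>) = G a \<phi>"
  by (simp add: G'_def G_def dist_comp)

lemma lemB:
  assumes rq: "rand_quantizer N p phis" and dphi: "det_quantizer N \<phi>"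
    and phi: "\<And>x. x \<in> space N \<Longrightarrow> \<phi> x = (g a x > 0)"
  shows "G' a (rdist_vec N f p phis) \<le> G a \<phi>"
    and "G' a (rdist_vec N f p phis) \<ge> G a \<phi> \<Longrightarrow>
         (\<And>m'. prob_st N f m' {x \<in> space N. g a x = 0} = 0) \<Longrightarrow>
         rdist_vec N f p phis = dist_vec N f \<phi>"
proof -
  let ?u = "rdist_vec N f p phis"
  have p0: "p j \<ge> 0" and dq: "det_quantizer N (phis j)" and ps: "p sums 1" for j
    using rq by (auto simp: rand_quantizer_def)
  have "(\<lambda>j. \<Sum>m\<in>UNIV. a m * (p j * P m (phis j) True)) sums (\<Sum>m\<in>UNIV. a m * ?u $ (m, True))"
    by (intro sums_sum sums_mult rsums[OF rq])
  moreover have "(\<lambda>j. \<Sum>m\<in>UNIV. a m * (p j * P m (phis j) True)) = (\<lambda>j. p j * G a (phis j))"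
    by (auto simp: G_def sum_distrib_left algebra_simps)
  ultimately have s1: "(\<lambda>j. p j * G a (phis j)) sums G' a ?u" by (simp add: G'_def)
  have s2: "(\<lambda>j. p j * G a \<phi>) sums G a \<phi>" using sums_mult2[OF ps, of "G a \<phi>"] by simp
  have s3: "(\<lambda>j. p j * (G a \<phi> - G a (phis j))) sums (G a \<phi> - G' a ?u)"
    using sums_diff[OF s2 s1] by (simp add: algebra_simps)
  have nn: "p j * (G a \<phi> - G a (phis j)) \<ge> 0" for j
    using p0[of j] lemA(1)[OF dq[of j] dphi phi] by simp
  have "G a \<phi> - G' a ?u \<ge> 0" using sums_le[OF _ sums_zero s3] nn by auto
  then show "G' a ?u \<le> G a \<phi>" by simp
  assume ge: "G' a ?u \<ge> G a \<phi>" and null: "\<And>m'. prob_st N f m' {x \<in> space N. g a x = 0} = 0"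
  have "suminf (\<lambda>j. p j * (G a \<phi> - G a (phis j))) = 0"
    using sums_unique[OF s3] ge \<open>G a \<phi> - G' a ?u \<ge> 0\<close> by simp
  then have z: "p j * (G a \<phi> - G a (phis j)) = 0" for j
    using suminf_eq_zero_iff[OF sums_summable[OF s3] nn] by auto
  have eqj: "p j * P m (phis j) b = p j * P m \<phi> b" for j m b
  proof (cases "p j = 0")
    case False
    then have "G a (phis j) \<ge> G a \<phi>" using z[of j] by simp
    then show ?thesis using lemA(2)[OF dq[of j] dphi phi _ null] by simp
  qed simp
  show "?u = dist_vec N f \<phi>"
  proof (subst vec_eq_iff, intro allI)
    fix k :: "'m \<times> bool"
    obtain m b where k: "k = (m, b)" by (cases k)
    have "(\<lambda>j. p j * P m \<phi> b) sums (P m \<phi> b)" using sums_mult2[OF ps, of "P m \<phi> b"] by simp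
    moreover have "(\<lambda>j. p j * P m (phis j) b) = (\<lambda>j. p j * P m \<phi> b)" using eqj by (intro ext) metis
    ultimately have "(\<lambda>j. p j * P m (phis j) b) sums (P m \<phi> b)" by simp
    then show "?u $ k = dist_vec N f \<phi> $ k"
      using sums_unique2[OF rsums[OF rq, of m b]] by (simp add: k dist_comp)
  qed
qed

lemma det_const: "det_quantizer N (\<lambda>_. c)"
  by (simp add: det_quantizer_def)

lemma dist_in: assumes "det_quantizer N \<phi>" shows "dist_vec N f \<phi> \<in> Qbar N f"
proof -
  let ?p = "\<lambda>j::nat. if j = 0 then (1::real) else 0"
  have rq: "rand_quantizer N ?p (\<lambda>_. \<phi>)"
    using assms sums_single[of 0 "\<lambda>_. 1::real"] by (auto simp: rand_quantizer_def)
  have "rdist_vec N f ?p (\<lambda>_. \<phi>) = dist_vec N f \<phi>"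
  proof (subst vec_eq_iff, intro allI)
    fix k :: "'m \<times> bool"
    obtain m b where k: "k = (m, b)" by (cases k)
    have "(\<lambda>j. ?p j * P m \<phi> b) = (\<lambda>j. if j = 0 then P m \<phi> b else 0)" by auto
    then have "(\<lambda>j. ?p j * P m \<phi> b) sums P m \<phi> b" using sums_single[of 0 "\<lambda>_. P m \<phi> b"] by simp
    then show "rdist_vec N f ?p (\<lambda>_. \<phi>) $ k = dist_vec N f \<phi> $ k"
      using sums_unique2[OF rsums[OF rq, of m b]] by (simp add: k dist_comp)
  qed
  then have "\<exists>p phis. dist_vec N f \<phi> = rdist_vec N f p phis \<and> rand_quantizer N p phis" using rq by metis
  then show ?thesis by (simp add: Qbar_def)
qed

lemma Qbar_compl: assumes "u \<in> Qbar N f" shows "u $ (m, False) = 1 - u $ (m, True)"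
proof -
  obtain p phis where rq: "rand_quantizer N p phis" and u: "u = rdist_vec N f p phis"
    using assms unfolding Qbar_def by blast
  have dq: "det_quantizer N (phis j)" and ps: "p sums 1" for j
    using rq by (auto simp: rand_quantizer_def)
  have "(\<lambda>j. p j - p j * P m (phis j) True) sums (1 - u $ (m, True))"
    using sums_diff[OF ps rsums[OF rq, of m True]] u by simp
  moreover have "(\<lambda>j. p j - p j * P m (phis j) True) = (\<lambda>j. p j * P m (phis j) False)"
  proof
    fix j
    have "P m (phis j) False = 1 - P m (phis j) True" using P_sum[OF dq[of j], of m] by simp
    then show "p j - p j * P m (phis j) True = p j * P m (phis j) False" by (simp add: right_diff_distrib)
  qed
  ultimately show ?thesis using sums_unique2[OF rsums[OF rq, of m False]] u by simp
qed

lemma interleave_sums: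
  fixes F H :: "nat \<Rightarrow> real"
  assumes "F sums a" "H sums b"
  shows "(\<lambda>j. if even j then F (j div 2) else H (j div 2)) sums (a + b)"
proof -
  define E where "E j = (if even j then F (j div 2) else 0)" for j
  define Od where "Od j = (if even j then 0 else H (j div 2))" for j
  have "(\<lambda>n. E (2 * n)) = F" by (auto simp: E_def)
  moreover have "strict_mono (\<lambda>n::nat. 2 * n)" by (auto simp: strict_mono_def)
  moreover have "E n = 0" if "n \<notin> range (\<lambda>n::nat. 2 * n)" for n
    using that by (auto simp: E_def elim!: evenE)
  ultimately have "E sums a" using sums_mono_reindex[of "\<lambda>n::nat. 2 * n" E a] assms(1) by simp
  have "(\<lambda>n. Od (2 * n + 1)) = H" by (auto simp: Od_def)
  moreover have "strict_mono (\<lambda>n::nat. 2 * n + 1)" by (auto simp: strict_mono_def)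
  moreover have "Od n = 0" if "n \<notin> range (\<lambda>n::nat. 2 * n + 1)" for n
    using that by (auto simp: Od_def elim!: oddE)
  ultimately have "Od sums b" using sums_mono_reindex[of "\<lambda>n::nat. 2 * n + 1" Od b] assms(2) by simp
  have "(\<lambda>j. E j + Od j) sums (a + b)" using sums_add[OF \<open>E sums a\<close> \<open>Od sums b\<close>] .
  moreover have "(\<lambda>j. E j + Od j) = (\<lambda>j. if even j then F (j div 2) else H (j div 2))"
    by (auto simp: E_def Od_def)
  ultimately show ?thesis by simp
qed

lemma Qbar_convex: "convex (Qbar N f)"
proof (unfold convex_def, intro ballI allI impI)
  fix x y and s t :: real
  assume x: "x \<in> Qbar N f" and y: "y \<in> Qbar N f" and st: "0 \<le> s" "0 \<le> t" "s + t = 1"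
  obtain p1 phis1 where rq1: "rand_quantizer N p1 phis1" and x': "x = rdist_vec N f p1 phis1"
    using x unfolding Qbar_def by blast
  obtain p2 phis2 where rq2: "rand_quantizer N p2 phis2" and y': "y = rdist_vec N f p2 phis2"
    using y unfolding Qbar_def by blast
  define p where "p j = (if even j then s * p1 (j div 2) else t * p2 (j div 2))" for j
  define phis where "phis j = (if even j then phis1 (j div 2) else phis2 (j div 2))" for j
  have rq: "rand_quantizer N p phis"
  proof -
    have "p sums (s * 1 + t * 1)" unfolding p_def
      using rq1 rq2 by (intro interleave_sums sums_mult) (auto simp: rand_quantizer_def)
    then show ?thesis using rq1 rq2 st by (auto simp: rand_quantizer_def p_def phis_def)
  qed
  have "rdist_vec N f p phis = s *\<^sub>R x + t *\<^sub>R y"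
  proof (subst vec_eq_iff, intro allI)
    fix k :: "'m \<times> bool"
    obtain m b where k: "k = (m, b)" by (cases k)
    have "(\<lambda>j. if even j then s * (p1 (j div 2) * P m (phis1 (j div 2)) b)
                 else t * (p2 (j div 2) * P m (phis2 (j div 2)) b)) sums (s * x $ k + t * y $ k)"
      by (intro interleave_sums sums_mult) (auto simp: x' y' k intro: rsums rq1 rq2)
    moreover have "(\<lambda>j. if even j then s * (p1 (j div 2) * P m (phis1 (j div 2)) b)
                 else t * (p2 (j div 2) * P m (phis2 (j div 2)) b)) = (\<lambda>j. p j * P m (phis j) b)"
      by (auto simp: p_def phis_def)
    ultimately show "rdist_vec N f p phis $ k = (s *\<^sub>R x + t *\<^sub>R y) $ k"
      using sums_unique2[OF rsums[OF rq, of m b]] by (simp add: k)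
  qed
  then have "\<exists>p phis. s *\<^sub>R x + t *\<^sub>R y = rdist_vec N f p phis \<and> rand_quantizer N p phis" using rq by metis
  then show "s *\<^sub>R x + t *\<^sub>R y \<in> Qbar N f" by (simp add: Qbar_def)
qed

lemma P_const_T: "P m (\<lambda>_. True) True = 1" and P_const_F: "P m (\<lambda>_. False) True = 0"
proof -
  have "S (\<lambda>_. True) False = {}" "S (\<lambda>_. False) True = {}" by (auto simp: S_def)
  then show "P m (\<lambda>_. True) True = 1" "P m (\<lambda>_. False) True = 0"
    using P_sum[OF det_const[of True], of m] by (auto simp: prob_st_def)
qed

lemma Qbar_not_single: "Qbar N f \<noteq> {v}"
proof
  assume h: "Qbar N f = {v}"
  have "dist_vec N f (\<lambda>_. True) = v" "dist_vec N f (\<lambda>_. False) = v"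
    using dist_in[OF det_const, of True] dist_in[OF det_const, of False] h by auto
  then have "dist_vec N f (\<lambda>_. True) $ (undefined, True) = dist_vec N f (\<lambda>_. False) $ (undefined, True)"
    by simp
  then show False by (simp add: dist_comp P_const_T P_const_F)
qed

lemma G'_lin: "G' a ((1 - t) *\<^sub>R u + t *\<^sub>R w) = (1 - t) * G' a u + t * G' a w"
proof -
  have "G' a ((1 - t) *\<^sub>R u + t *\<^sub>R w) = (\<Sum>m\<in>UNIV. (1-t) * (a m * u$(m,True)) + t * (a m * w$(m,True)))"
    by (simp add: G'_def algebra_simps)
  also have "\<dots> = (1 - t) * G' a u + t * G' a w" by (simp add: G'_def sum.distrib sum_distrib_left)
  finally show ?thesis .
qed

lemma ULQ_unpack:
  assumes "is_ULQ N f \<phi>"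
  obtains a where "det_quantizer N \<phi>" "\<And>x. x \<in> space N \<Longrightarrow> \<phi> x = (g a x > 0)"
    "\<And>m'. prob_st N f m' {x \<in> space N. g a x = 0} = 0"
  using assms unfolding is_ULQ_def g_def by blast

lemma ULQ_extreme: assumes "is_ULQ N f \<phi>" shows "dist_vec N f \<phi> extreme_point_of Qbar N f"
proof -
  obtain a where dphi: "det_quantizer N \<phi>" and phi: "\<And>x. x \<in> space N \<Longrightarrow> \<phi> x = (g a x > 0)"
    and null: "\<And>m'. prob_st N f m' {x \<in> space N. g a x = 0} = 0"
    using ULQ_unpack[OF assms] by blast
  let ?d = "dist_vec N f \<phi>"
  have key: "u = ?d" if u: "u \<in> Qbar N f" and ge: "G' a u \<ge> G a \<phi>" for u
  proof -
    obtain p phis where rq: "rand_quantizer N p phis" and u': "u = rdist_vec N f p phis"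
      using u unfolding Qbar_def by blast
    show ?thesis using lemB(2)[OF rq dphi phi _ null] ge u' by simp
  qed
  have le: "G' a u \<le> G a \<phi>" if u: "u \<in> Qbar N f" for u
  proof -
    obtain p phis where rq: "rand_quantizer N p phis" and u': "u = rdist_vec N f p phis"
      using u unfolding Qbar_def by blast
    show ?thesis using lemB(1)[OF rq dphi phi] u' by simp
  qed
  have "?d \<notin> open_segment u w" if u: "u \<in> Qbar N f" and w: "w \<in> Qbar N f" for u w
  proof
    assume "?d \<in> open_segment u w"
    then obtain t where uw: "u \<noteq> w" and t: "0 < t" "t < 1" and d: "?d = (1 - t) *\<^sub>R u + t *\<^sub>R w"
      by (auto simp: in_segment)
    have Gd: "G' a ?d = G a \<phi>" by (rule G'_dist)
    have lu: "G' a u \<le> G a \<phi>" and lw: "G' a w \<le> G a \<phi>" using le u w by auto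
    have "(1 - t) * G' a u + t * G' a w = G a \<phi>" using Gd d G'_lin by metis
    then have "G' a u \<ge> G a \<phi>" "G' a w \<ge> G a \<phi>"
    proof -
      have "(1 - t) * G' a u \<le> (1 - t) * G a \<phi>" using lu t by (intro mult_left_mono) auto
      moreover have "t * G' a w \<le> t * G a \<phi>" using lw t by (intro mult_left_mono) auto
      moreover have "(1 - t) * G a \<phi> + t * G a \<phi> = G a \<phi>" by (simp add: algebra_simps)
      ultimately have "(1 - t) * G' a u = (1 - t) * G a \<phi>" "t * G' a w = t * G a \<phi>"
        using \<open>(1 - t) * G' a u + t * G' a w = G a \<phi>\<close> by linarith+
      then show "G' a u \<ge> G a \<phi>" "G' a w \<ge> G a \<phi>" using t by auto
    qed
    then have "u = ?d" "w = ?d" using key u w by auto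
    then show False using uw by simp
  qed
  then show ?thesis using dist_in[OF dphi] by (auto simp: extreme_point_of_def)
qed

lemma inner_split: "(c::real^('m \<times> bool)) \<bullet> u = (\<Sum>m\<in>UNIV. c $ (m, True) * u $ (m, True) + c $ (m, False) * u $ (m, False))"
proof -
  have "c \<bullet> u = (\<Sum>k\<in>UNIV \<times> UNIV. c $ k * u $ k)" by (simp add: inner_vec_def UNIV_Times_UNIV)
  also have "\<dots> = (\<Sum>m\<in>UNIV. \<Sum>b\<in>UNIV. c $ (m, b) * u $ (m, b))"
    by (simp add: sum.cartesian_product)
  also have "\<dots> = (\<Sum>m\<in>UNIV. c $ (m, True) * u $ (m, True) + c $ (m, False) * u $ (m, False))"
    by (simp add: UNIV_bool add.commute)
  finally show ?thesis .
qed

lemma extreme_ULQ: assumes v: "v extreme_point_of Qbar N f" and li: "lin_indep_dens N f"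
  shows "v \<in> Q_U N f"
proof -
  have vin: "v \<in> Qbar N f" using v by (simp add: extreme_point_of_def)
  have nri: "v \<notin> rel_interior (Qbar N f)"
    using extreme_point_not_in_REL_INTERIOR[OF v Qbar_not_single] .
  obtain c where "c \<noteq> 0" and c1: "\<And>y. y \<in> Qbar N f \<Longrightarrow> c \<bullet> v \<le> c \<bullet> y"
    and c2: "\<And>y. y \<in> rel_interior (Qbar N f) \<Longrightarrow> c \<bullet> v < c \<bullet> y"
    using supporting_hyperplane_rel_boundary[OF Qbar_convex vin nri] by blast
  obtain y0 where y0: "y0 \<in> rel_interior (Qbar N f)"
    using rel_interior_eq_empty[OF Qbar_convex] vin by blast
  have y0in: "y0 \<in> Qbar N f" using y0 rel_interior_subset by blast
  define a where "a m = c $ (m, False) - c $ (m, True)" for m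
  define K where "K = (\<Sum>m\<in>UNIV. c $ (m, False))"
  have cu: "c \<bullet> u = K - G' a u" if "u \<in> Qbar N f" for u
  proof -
    have "c \<bullet> u = (\<Sum>m\<in>UNIV. c $ (m, False) - a m * u $ (m, True))"
      unfolding inner_split
      by (intro sum.cong refl, subst Qbar_compl[OF that]) (simp add: a_def algebra_simps)
    also have "\<dots> = K - G' a u" by (simp add: K_def G'_def sum_subtractf)
    finally show ?thesis .
  qed
  have "a \<noteq> (\<lambda>_. 0)"
  proof
    assume "a = (\<lambda>_. 0)"
    then have "G' a u = 0" for u by (simp add: G'_def)
    then show False using c2[OF y0] cu[OF y0in] cu[OF vin] by simp
  qed
  then have null: "\<And>m'. prob_st N f m' {x \<in> space N. g a x = 0} = 0"
    using li unfolding lin_indep_dens_def g_def by blast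
  define \<phi> where "\<phi> x = (g a x > 0)" for x
  have dphi: "det_quantizer N \<phi>" unfolding det_quantizer_def \<phi>_def pred_def[symmetric]
    by measurable
  have phi: "\<And>x. x \<in> space N \<Longrightarrow> \<phi> x = (g a x > 0)" by (simp add: \<phi>_def)
  have ulq: "is_ULQ N f \<phi>"
    unfolding is_ULQ_def using dphi phi null unfolding g_def by blast
  have "c \<bullet> v \<le> c \<bullet> dist_vec N f \<phi>" using c1[OF dist_in[OF dphi]] .
  then have ge: "G' a v \<ge> G a \<phi>" using cu[OF vin] cu[OF dist_in[OF dphi]] G'_dist by simp
  obtain p phis where rq: "rand_quantizer N p phis" and v': "v = rdist_vec N f p phis"
    using vin unfolding Qbar_def by blast
  have "v = dist_vec N f \<phi>" using lemB(2)[OF rq dphi phi _ null] ge v' by simp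
  then show ?thesis using ulq unfolding Q_U_def by blast
qed

end

theorem lemmaA1:
  fixes N :: "'a measure" and f :: "'m::finite \<Rightarrow> 'a \<Rightarrow> real"
  assumes "sigma_finite_measure N"
    and "\<And>m. f m \<in> borel_measurable N"
    and "\<And>m x. x \<in> space N \<Longrightarrow> f m x \<ge> 0"
    and "\<And>m. (\<integral>\<^sup>+ x. ennreal (f m x) \<partial>N) = 1"
    and "lin_indep_dens N f"
  shows "Q_alpha N f = Q_U N f"
proof -
  interpret qs N f using assms(2-4) by unfold_locales auto
  show ?thesis
  proof
    show "Q_alpha N f \<subseteq> Q_U N f" using extreme_ULQ assms(5) by (auto simp: Q_alpha_def)
    show "Q_U N f \<subseteq> Q_alpha N f" using ULQ_extreme by (auto simp: Q_alpha_def Q_U_def)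
  qed
qed

end
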